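(* Let $X=\{a_1,\dots,a_\ell\}$ be a finite set of $\ell$ distinct points, $N\ge2$, let $\gamma_*$ be an extreme point of $\mathcal{P}_{sym}(X^N)$ and let $\lambda=M_1\gamma_*$. Then: (a) $\gamma_*$ is the unique maximizer over $\gamma\in\mathcal{P}_{sym}(X^N)$ of $$C_\lambda[\gamma]=N^2\sum_{i=1}^\ell\lambda_i(M_1\gamma)_i+C_{GS}[\gamma];$$ (b) in particular, $\gamma_*$ is the unique maximizer of $C_{GS}[\gamma]$ over $\gamma\in\mathcal{P}_{sym}(X^N)$ subject to $M_1\gamma=\lambda$.
   Context: Probability measures on $X$ are identified with vectors $(\lambda_i)$, $\lambda_i=\lambda(\{a_i\})$. The symmetrization operator is $(S\gamma)(A_1\times\cdots\times A_N)=\frac1{N!}\sum_{\sigma\in S_N}\gamma(A_{\sigma(1)}\times\cdots\times A_{\sigma(N)})$; $\mathcal{P}_{sym}(X^N)$ is the set of probability measures $\gamma$ on $X^N$ with $S\gamma=\gamma$; $(M_1\gamma)(A)=\gamma(A\times X^{N-1})$. The Gangbo–Święch cost is $C_{GS}[\gamma]=\int_{X^N}\sum_{1\le i<j\le N}d(x_i,x_j)^p\,d\gamma(x_1,\dots,x_N)$ ($1\le p<\infty$), with $d$ the discrete metric $d(x,y)=1$ for $x\ne y$, $d(x,x)=0$. *)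

theory Defs
  imports Complex_Main "HOL-Combinatorics.Permutations"
begin

text \<open>A point of X^N is represented as a list of length N with entries in X;
  a measure on X^N (finite discrete) is represented by its atom weights
  gamma :: 'a list => real, required to vanish outside X^N.\<close>

definition config :: "'a set \<Rightarrow> nat \<Rightarrow> 'a list set" where
  "config X N = {xs. length xs = N \<and> set xs \<subseteq> X}"

definition prob_on :: "'a set \<Rightarrow> nat \<Rightarrow> ('a list \<Rightarrow> real) \<Rightarrow> bool" where
  "prob_on X N \<gamma> \<longleftrightarrow> (\<forall>xs. \<gamma> xs \<ge> 0) \<and> (\<forall>xs. xs \<notin> config X N \<longrightarrow> \<gamma> xs = 0)
     \<and> (\<Sum>xs\<in>config X N. \<gamma> xs) = 1"

definition perm_conf :: "(nat \<Rightarrow> nat) \<Rightarrow> 'a list \<Rightarrow> 'a list" where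
  "perm_conf \<sigma> xs = map (\<lambda>i. xs ! \<sigma> i) [0..<length xs]"

definition symmetrize :: "nat \<Rightarrow> ('a list \<Rightarrow> real) \<Rightarrow> 'a list \<Rightarrow> real" where
  "symmetrize N \<gamma> xs = (1 / fact N) * (\<Sum>\<sigma>\<in>{\<sigma>. \<sigma> permutes {..<N}}. \<gamma> (perm_conf \<sigma> xs))"

definition Psym :: "'a set \<Rightarrow> nat \<Rightarrow> ('a list \<Rightarrow> real) set" where
  "Psym X N = {\<gamma>. prob_on X N \<gamma> \<and> symmetrize N \<gamma> = \<gamma>}"

definition marg1 :: "'a set \<Rightarrow> nat \<Rightarrow> ('a list \<Rightarrow> real) \<Rightarrow> 'a \<Rightarrow> real" where
  "marg1 X N \<gamma> a = (\<Sum>xs\<in>{xs\<in>config X N. xs ! 0 = a}. \<gamma> xs)"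

definition ddisc :: "'a \<Rightarrow> 'a \<Rightarrow> real" where
  "ddisc x y = (if x = y then 0 else 1)"

definition C_GS :: "real \<Rightarrow> 'a set \<Rightarrow> nat \<Rightarrow> ('a list \<Rightarrow> real) \<Rightarrow> real" where
  "C_GS p X N \<gamma> = (\<Sum>xs\<in>config X N. \<gamma> xs *
      (\<Sum>(i,j)\<in>{(i,j). i < j \<and> j < N}. ddisc (xs ! i) (xs ! j) powr p))"

definition C_lam :: "real \<Rightarrow> 'a set \<Rightarrow> nat \<Rightarrow> ('a \<Rightarrow> real) \<Rightarrow> ('a list \<Rightarrow> real) \<Rightarrow> real" where
  "C_lam p X N lam \<gamma> = (real N)^2 * (\<Sum>a\<in>X. lam a * marg1 X N \<gamma> a) + C_GS p X N \<gamma>"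

definition extreme_pt :: "('a list \<Rightarrow> real) \<Rightarrow> ('a list \<Rightarrow> real) set \<Rightarrow> bool" where
  "extreme_pt g P \<longleftrightarrow> g \<in> P \<and> (\<forall>g1\<in>P. \<forall>g2\<in>P. \<forall>t::real. 0 < t \<and> t < 1 \<and>
      g = (\<lambda>xs. t * g1 xs + (1 - t) * g2 xs) \<longrightarrow> g1 = g2)"

end

theory Submission
  imports Defs
begin

lemma perm_conf_eq: "perm_conf = permute_list"
  by (auto simp: fun_eq_iff perm_conf_def permute_list_def)

lemma count_sum: "real (count (mset u) a) = (\<Sum>i<length u. if u!i = a then 1 else 0)"
proof -
  have "count (mset u) a = card {i. i<length u \<and> a = u!i}"
    by (simp add: count_mset count_list_eq_length_filter length_filter_conv_card)
  also have "{i. i<length u \<and> a = u!i} = {..<length u} \<inter> {i. u!i = a}" by auto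
  finally show ?thesis by (simp add: sum.If_cases)
qed

lemma pairs_sum:
  fixes d :: "nat \<Rightarrow> nat \<Rightarrow> real"
  assumes "\<And>i j. d i j = d j i" "\<And>i. d i i = 0"
  shows "2 * (\<Sum>(i,j)\<in>{(i,j). i < j \<and> j < N}. d i j) = (\<Sum>i<N. \<Sum>j<N. d i j)"
proof (induction N)
  case 0
  then show ?case by simp
next
  case (Suc N)
  have eq: "{(i,j). i < j \<and> j < Suc N} = {(i,j). i < j \<and> j < N} \<union> (\<lambda>i. (i,N)) ` {..<N}" by auto
  have fin: "finite {(i,j). i < j \<and> j < N}"
    by (rule finite_subset[of _ "{..<N} \<times> {..<N}"]) auto
  have "(\<Sum>(i,j)\<in>{(i,j). i < j \<and> j < Suc N}. d i j) = (\<Sum>(i,j)\<in>{(i,j). i < j \<and> j < N}. d i j) + (\<Sum>i<N. d i N)"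
    unfolding eq by (subst sum.union_disjoint) (auto simp: fin sum.reindex inj_on_def)
  moreover have "(\<Sum>i<Suc N. \<Sum>j<Suc N. d i j) = (\<Sum>i<N. \<Sum>j<N. d i j) + 2 * (\<Sum>i<N. d i N)"
    by (simp add: sum.distrib assms(2)) (simp add: assms(1)[of N])
  ultimately show ?case using Suc by simp
qed

lemma sym_inv:
  assumes "\<gamma> \<in> Psym X N" "length xs = N" "\<sigma> permutes {..<N}"
  shows "\<gamma> (permute_list \<sigma> xs) = \<gamma> xs"
proof -
  have S: "symmetrize N \<gamma> = \<gamma>" using assms(1) by (simp add: Psym_def)
  have "\<gamma> (permute_list \<sigma> xs) = symmetrize N \<gamma> (permute_list \<sigma> xs)" using S by simp
  also have "\<dots> = (1 / fact N) * (\<Sum>\<tau>\<in>{\<tau>. \<tau> permutes {..<N}}. \<gamma> (permute_list (\<sigma> \<circ> \<tau>) xs))"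
    unfolding symmetrize_def perm_conf_eq
    by (intro arg_cong[where f="\<lambda>x. _ * x"] sum.cong refl) (simp add: permute_list_compose assms(2))
  also have "(\<Sum>\<tau>\<in>{\<tau>. \<tau> permutes {..<N}}. \<gamma> (permute_list (\<sigma> \<circ> \<tau>) xs))
      = (\<Sum>\<tau>\<in>{\<tau>. \<tau> permutes {..<N}}. \<gamma> (permute_list \<tau> xs))"
    using setum_permutations_compose_left[OF assms(3), of "\<lambda>\<tau>. \<gamma> (permute_list \<tau> xs)"] by simp
  also have "(1 / fact N) * \<dots> = symmetrize N \<gamma> xs" unfolding symmetrize_def perm_conf_eq ..
  finally show ?thesis using S by simp
qed

lemma config_perm:
  assumes "xs \<in> config X N" "\<sigma> permutes {..<N}"
  shows "permute_list \<sigma> xs \<in> config X N"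
  using assms by (simp add: config_def)

lemma sym_of_inv:
  assumes "prob_on X N \<gamma>"
    and inv: "\<And>xs \<sigma>. length xs = N \<Longrightarrow> \<sigma> permutes {..<N} \<Longrightarrow> \<gamma> (permute_list \<sigma> xs) = \<gamma> xs"
  shows "symmetrize N \<gamma> = \<gamma>"
proof
  fix xs :: "'a list"
  have card: "card {\<sigma>. \<sigma> permutes {..<N}} = fact N" by (rule card_permutations) auto
  show "symmetrize N \<gamma> xs = \<gamma> xs"
  proof (cases "length xs = N")
    case True
    then show ?thesis unfolding symmetrize_def perm_conf_eq
      using card by (simp add: inv)
  next
    case False
    have "\<gamma> (permute_list \<sigma> xs) = 0" for \<sigma>
      using assms(1) False by (simp add: prob_on_def config_def)
    moreover have "\<gamma> xs = 0" using assms(1) False by (simp add: prob_on_def config_def)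
    ultimately show ?thesis unfolding symmetrize_def perm_conf_eq by simp
  qed
qed

lemma finite_config: "finite X \<Longrightarrow> finite (config X N)"
  unfolding config_def using finite_lists_length_eq[of X N] by (simp add: conj_commute)

lemma marg_sym:
  assumes fin: "finite X" and g: "\<gamma> \<in> Psym X N" and N: "0 < N"
  shows "real N * marg1 X N \<gamma> a = (\<Sum>xs\<in>config X N. \<gamma> xs * real (count (mset xs) a))"
proof -
  have fc: "finite (config X N)" using fin by (rule finite_config)
  have m: "marg1 X N \<gamma> a = (\<Sum>xs\<in>config X N. if xs!0 = a then \<gamma> xs else 0)"
    unfolding marg1_def using fc by (rule sum.inter_filter)
  have k: "(\<Sum>xs\<in>config X N. if xs!k = a then \<gamma> xs else 0) = (\<Sum>xs\<in>config X N. if xs!0 = a then \<gamma> xs else 0)"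
    if kN: "k < N" for k
  proof -
    define \<tau> where "\<tau> = transpose 0 k"
    have tp: "\<tau> permutes {..<N}" unfolding \<tau>_def using kN N by (intro permutes_swap_id) auto
    have tt: "\<tau> \<circ> \<tau> = id" unfolding \<tau>_def by (auto simp: fun_eq_iff transpose_def)
    have inv: "permute_list \<tau> (permute_list \<tau> xs) = xs" if "xs \<in> config X N" for xs
    proof -
      have "permute_list \<tau> (permute_list \<tau> xs) = permute_list (\<tau> \<circ> \<tau>) xs"
        using that tp by (simp add: permute_list_compose config_def)
      then show ?thesis using tt by simp
    qed
    show ?thesis
    proof (rule sum.reindex_bij_witness[where i="permute_list \<tau>" and j="permute_list \<tau>"])
      fix xs assume xs: "xs \<in> config X N"
      show "permute_list \<tau> (permute_list \<tau> xs) = xs" using inv xs .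
      show "permute_list \<tau> (permute_list \<tau> xs) = xs" using inv xs .
      show "permute_list \<tau> xs \<in> config X N" using xs tp by (rule config_perm)
      show "permute_list \<tau> xs \<in> config X N" using xs tp by (rule config_perm)
      have l: "length xs = N" using xs by (simp add: config_def)
      have "permute_list \<tau> xs ! 0 = xs ! k"
        using tp l N by (simp add: permute_list_nth \<tau>_def)
      moreover have "\<gamma> (permute_list \<tau> xs) = \<gamma> xs" using sym_inv[OF g l tp] .
      ultimately show "(if permute_list \<tau> xs ! 0 = a then \<gamma> (permute_list \<tau> xs) else 0) = (if xs ! k = a then \<gamma> xs else 0)"
        by simp
    qed
  qed
  have "(\<Sum>xs\<in>config X N. \<gamma> xs * real (count (mset xs) a))
      = (\<Sum>xs\<in>config X N. \<Sum>k<N. if xs!k = a then \<gamma> xs else 0)"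
  proof (intro sum.cong refl)
    fix xs assume "xs \<in> config X N"
    then have l: "length xs = N" by (simp add: config_def)
    have "\<gamma> xs * real (count (mset xs) a) = \<gamma> xs * (\<Sum>k<N. if xs!k = a then 1 else 0)"
      unfolding count_sum l ..
    also have "\<dots> = (\<Sum>k<N. if xs!k = a then \<gamma> xs else 0)"
      unfolding sum_distrib_left by (intro sum.cong refl) simp
    finally show "\<gamma> xs * real (count (mset xs) a) = (\<Sum>k<N. if xs!k = a then \<gamma> xs else 0)" .
  qed
  also have "\<dots> = (\<Sum>k<N. \<Sum>xs\<in>config X N. if xs!k = a then \<gamma> xs else 0)"
    by (rule sum.swap)
  also have "\<dots> = (\<Sum>k<N. marg1 X N \<gamma> a)" unfolding m by (intro sum.cong refl k) simp
  finally show ?thesis by simp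
qed

lemma cost_formula:
  assumes fin: "finite X" and u: "u \<in> config X N" and p: "0 < p"
  shows "2 * (\<Sum>(i,j)\<in>{(i,j). i < j \<and> j < N}. ddisc (u ! i) (u ! j) powr p)
     = real N ^ 2 - (\<Sum>a\<in>X. real (count (mset u) a) ^ 2)"
proof -
  have l: "length u = N" and sX: "set u \<subseteq> X" using u by (auto simp: config_def)
  define d where "d i j = (if u!i = u!j then 0 else (1::real))" for i j
  have "(\<Sum>(i,j)\<in>{(i,j). i < j \<and> j < N}. ddisc (u ! i) (u ! j) powr p)
      = (\<Sum>(i,j)\<in>{(i,j). i < j \<and> j < N}. d i j)"
    by (intro sum.cong refl) (auto simp: d_def ddisc_def)
  moreover have "2 * (\<Sum>(i,j)\<in>{(i,j). i < j \<and> j < N}. d i j) = (\<Sum>i<N. \<Sum>j<N. d i j)"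
    by (rule pairs_sum) (auto simp: d_def)
  moreover have "(\<Sum>i<N. \<Sum>j<N. d i j) = (\<Sum>i<N. real N - real (count (mset u) (u!i)))"
  proof (intro sum.cong refl)
    fix i assume "i \<in> {..<N}"
    have "(\<Sum>j<N. d i j) = (\<Sum>j<N. 1 - (if u!j = u!i then 1 else 0))"
      by (intro sum.cong refl) (auto simp: d_def)
    also have "\<dots> = real N - (\<Sum>j<N. (if u!j = u!i then 1 else 0))"
      by (simp add: sum_subtractf)
    also have "\<dots> = real N - real (count (mset u) (u!i))" unfolding count_sum l ..
    finally show "(\<Sum>j<N. d i j) = real N - real (count (mset u) (u!i))" .
  qed
  moreover have "(\<Sum>i<N. real (count (mset u) (u!i))) = (\<Sum>a\<in>X. real (count (mset u) a) ^ 2)"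
  proof -
    have "(\<Sum>i<N. real (count (mset u) (u!i))) = (\<Sum>i<N. \<Sum>a\<in>X. if u!i = a then real (count (mset u) a) else 0)"
    proof (intro sum.cong refl)
      fix i assume "i \<in> {..<N}"
      then have "u!i \<in> X" using l sX by auto
      then show "real (count (mset u) (u!i)) = (\<Sum>a\<in>X. if u!i = a then real (count (mset u) a) else 0)"
        using fin by (simp add: sum.delta)
    qed
    also have "\<dots> = (\<Sum>a\<in>X. \<Sum>i<N. if u!i = a then real (count (mset u) a) else 0)"
      by (rule sum.swap)
    also have "\<dots> = (\<Sum>a\<in>X. real (count (mset u) a) * (\<Sum>i<N. if u!i = a then 1 else 0))"
      by (intro sum.cong refl) (simp add: sum_distrib_left if_distrib cong: if_cong)
    also have "\<dots> = (\<Sum>a\<in>X. real (count (mset u) a) ^ 2)"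
      unfolding count_sum[symmetric, of u] l[symmetric] by (simp add: power2_eq_square)
    finally show ?thesis .
  qed
  ultimately show ?thesis by (simp add: sum_subtractf power2_eq_square)
qed

lemma restrict_Psym:
  assumes fin: "finite X" and g: "\<gamma> \<in> Psym X N"
    and P: "\<And>xs \<sigma>. length xs = N \<Longrightarrow> \<sigma> permutes {..<N} \<Longrightarrow> P (permute_list \<sigma> xs) = P xs"
    and s: "s = (\<Sum>xs\<in>config X N. if P xs then \<gamma> xs else 0)" and spos: "0 < s"
  shows "(\<lambda>xs. if P xs then \<gamma> xs / s else 0) \<in> Psym X N"
proof -
  have pg: "prob_on X N \<gamma>" using g by (simp add: Psym_def)
  have pr: "prob_on X N (\<lambda>xs. if P xs then \<gamma> xs / s else 0)"
  proof -
    have "(\<Sum>xs\<in>config X N. if P xs then \<gamma> xs / s else 0) = s / s"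
      unfolding s sum_divide_distrib by (intro sum.cong refl) simp
    then show ?thesis using pg spos by (auto simp: prob_on_def)
  qed
  show ?thesis unfolding Psym_def
  proof (intro CollectI conjI pr sym_of_inv[OF pr])
    fix xs :: "'a list" and \<sigma> assume "length xs = N" "\<sigma> permutes {..<N}"
    then show "(if P (permute_list \<sigma> xs) then \<gamma> (permute_list \<sigma> xs) / s else 0) = (if P xs then \<gamma> xs / s else 0)"
      using P sym_inv[OF g] by simp
  qed
qed

lemma extreme_support:
  assumes fin: "finite X" and ext: "extreme_pt \<gamma>s (Psym X N)" and x0: "x0 \<in> config X N" and pos: "0 < \<gamma>s x0"
  shows "\<And>xs. mset xs \<noteq> mset x0 \<Longrightarrow> \<gamma>s xs = 0"
proof (rule ccontr)
  fix xs1 assume ne: "mset xs1 \<noteq> mset x0" and nz: "\<gamma>s xs1 \<noteq> 0"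
  have g: "\<gamma>s \<in> Psym X N" using ext by (simp add: extreme_pt_def)
  have pg: "prob_on X N \<gamma>s" using g by (simp add: Psym_def)
  have fc: "finite (config X N)" using fin by (rule finite_config)
  have nn: "\<And>xs. 0 \<le> \<gamma>s xs" using pg by (simp add: prob_on_def)
  have xs1: "xs1 \<in> config X N" using pg nz by (auto simp: prob_on_def)
  have pos1: "0 < \<gamma>s xs1" using nn[of xs1] nz by simp
  define t where "t = (\<Sum>xs\<in>config X N. if mset xs = mset x0 then \<gamma>s xs else 0)"
  define t2 where "t2 = (\<Sum>xs\<in>config X N. if \<not> mset xs = mset x0 then \<gamma>s xs else 0)"
  have "t + t2 = (\<Sum>xs\<in>config X N. \<gamma>s xs)" unfolding t_def t2_def sum.distrib[symmetric]
    by (intro sum.cong refl) simp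
  then have tsum: "t + t2 = 1" using pg by (simp add: prob_on_def)
  have "(if mset x0 = mset x0 then \<gamma>s x0 else 0) \<le> t" unfolding t_def
    by (rule member_le_sum[OF _ _ fc]) (use x0 nn in auto)
  then have tpos: "0 < t" using pos by simp
  have "(if \<not> mset xs1 = mset x0 then \<gamma>s xs1 else 0) \<le> t2" unfolding t2_def
    by (rule member_le_sum[OF _ _ fc]) (use xs1 nn in auto)
  then have t2pos: "0 < t2" using pos1 ne by simp
  have inv: "\<And>xs \<sigma>. length xs = N \<Longrightarrow> \<sigma> permutes {..<N} \<Longrightarrow> (mset (permute_list \<sigma> xs) = mset x0) = (mset xs = mset x0)"
    by simp
  have inv2: "\<And>xs \<sigma>. length xs = N \<Longrightarrow> \<sigma> permutes {..<N} \<Longrightarrow> (\<not> mset (permute_list \<sigma> xs) = mset x0) = (\<not> mset xs = mset x0)"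
    by simp
  define g1 where "g1 = (\<lambda>xs. if mset xs = mset x0 then \<gamma>s xs / t else 0)"
  define g2 where "g2 = (\<lambda>xs. if \<not> mset xs = mset x0 then \<gamma>s xs / t2 else 0)"
  have g1: "g1 \<in> Psym X N" unfolding g1_def by (rule restrict_Psym[OF fin g inv t_def tpos])
  have g2: "g2 \<in> Psym X N" unfolding g2_def by (rule restrict_Psym[OF fin g inv2 t2_def t2pos])
  have lt: "t < 1" using tsum t2pos by simp
  have comb: "\<gamma>s = (\<lambda>xs. t * g1 xs + (1 - t) * g2 xs)"
  proof -
    have "1 - t = t2" using tsum by simp
    then show ?thesis using tpos t2pos by (auto simp: fun_eq_iff g1_def g2_def)
  qed
  have "g1 = g2" using ext g1 g2 comb tpos lt unfolding extreme_pt_def by blast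
  then have "g1 x0 = g2 x0" by simp
  then show False using pos tpos by (simp add: g1_def g2_def)
qed

lemma orbit_unique:
  assumes fin: "finite X" and g: "\<gamma> \<in> Psym X N" and x0: "x0 \<in> config X N"
    and z: "\<And>xs. mset xs \<noteq> mset x0 \<Longrightarrow> \<gamma> xs = 0"
  shows "\<gamma> = (\<lambda>xs. if mset xs = mset x0 then 1 / real (card {xs\<in>config X N. mset xs = mset x0}) else 0)"
proof -
  let ?K = "{xs\<in>config X N. mset xs = mset x0}"
  have pg: "prob_on X N \<gamma>" using g by (simp add: Psym_def)
  have fc: "finite (config X N)" using fin by (rule finite_config)
  have l0: "length x0 = N" using x0 by (simp add: config_def)
  have c: "\<gamma> xs = \<gamma> x0" if me: "mset xs = mset x0" for xs
  proof -
    obtain f where f: "f permutes {..<length x0}" "permute_list f x0 = xs"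
      using mset_eq_permutation[OF me] by blast
    have "f permutes {..<N}" using f(1) l0 by simp
    then have "\<gamma> (permute_list f x0) = \<gamma> x0" by (rule sym_inv[OF g l0])
    then show ?thesis using f(2) by simp
  qed
  have "1 = (\<Sum>xs\<in>config X N. \<gamma> xs)" using pg by (simp add: prob_on_def)
  also have "\<dots> = (\<Sum>xs\<in>config X N. if mset xs = mset x0 then \<gamma> x0 else 0)"
    by (intro sum.cong refl) (metis c z)
  also have "\<dots> = (\<Sum>xs\<in>?K. \<gamma> x0)"
    by (rule sum.inter_filter[OF fc, symmetric])
  also have "\<dots> = real (card ?K) * \<gamma> x0" by simp
  finally have e: "1 = real (card ?K) * \<gamma> x0" .
  then have "card ?K \<noteq> 0" by (metis mult_zero_left of_nat_0 zero_neq_one)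
  then have "\<gamma> x0 = 1 / real (card ?K)" using e by (simp add: field_simps)
  then show ?thesis unfolding fun_eq_iff by (metis c z)
qed

theorem corollary3p3:
  fixes X :: "'a set" and N :: nat and p :: real
    and \<gamma>s :: "'a list \<Rightarrow> real" and lam :: "'a \<Rightarrow> real"
  assumes "finite X" and "N \<ge> 2" and "1 \<le> p"
    and "extreme_pt \<gamma>s (Psym X N)"
    and "lam = marg1 X N \<gamma>s"
  shows "(\<forall>\<gamma>\<in>Psym X N. \<gamma> \<noteq> \<gamma>s \<longrightarrow> C_lam p X N lam \<gamma> < C_lam p X N lam \<gamma>s)
    \<and> (\<forall>\<gamma>\<in>Psym X N. marg1 X N \<gamma> = lam \<and> \<gamma> \<noteq> \<gamma>s \<longrightarrow> C_GS p X N \<gamma> < C_GS p X N \<gamma>s)"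
proof -
  note fin = assms(1) and ext = assms(4) and lamdef = assms(5)
  have N0: "0 < N" using assms(2) by simp
  have p0: "0 < p" using assms(3) by simp
  have gs: "\<gamma>s \<in> Psym X N" using ext by (simp add: extreme_pt_def)
  have pgs: "prob_on X N \<gamma>s" using gs by (simp add: Psym_def)
  have fc: "finite (config X N)" using fin by (rule finite_config)
  have "\<exists>x0\<in>config X N. \<gamma>s x0 \<noteq> 0"
  proof (rule ccontr)
    assume "\<not> ?thesis"
    then have "(\<Sum>xs\<in>config X N. \<gamma>s xs) = 0" by simp
    then show False using pgs by (simp add: prob_on_def)
  qed
  then obtain x0 where x0: "x0 \<in> config X N" and nz0: "\<gamma>s x0 \<noteq> 0" by blast
  have pos0: "0 < \<gamma>s x0" using pgs nz0 unfolding prob_on_def by (metis less_eq_real_def)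
  have zs: "\<And>xs. mset xs \<noteq> mset x0 \<Longrightarrow> \<gamma>s xs = 0"
    by (rule extreme_support[OF fin ext x0 pos0])
  define n :: "'a \<Rightarrow> real" where "n a = real (count (mset x0) a)" for a
  define c :: "'a list \<Rightarrow> 'a \<Rightarrow> real" where "c xs a = real (count (mset xs) a)" for xs a
  define h :: "'a list \<Rightarrow> real" where "h xs = (\<Sum>a\<in>X. (n a - c xs a)^2)" for xs
  define Q where "Q = real N ^ 2 / 2 + (\<Sum>a\<in>X. n a ^ 2) / 2"
  have lamN: "real N * lam a = n a" for a
  proof -
    have "real N * lam a = (\<Sum>xs\<in>config X N. \<gamma>s xs * c xs a)"
      unfolding lamdef c_def by (rule marg_sym[OF fin gs N0])
    also have "\<dots> = (\<Sum>xs\<in>config X N. \<gamma>s xs * n a)"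
    proof (intro sum.cong refl)
      fix xs show "\<gamma>s xs * c xs a = \<gamma>s xs * n a"
        by (cases "mset xs = mset x0") (simp_all add: c_def n_def zs)
    qed
    also have "\<dots> = n a" using pgs by (simp add: sum_distrib_right[symmetric] prob_on_def)
    finally show ?thesis .
  qed
  have key: "C_lam p X N lam \<gamma> = Q - (\<Sum>xs\<in>config X N. \<gamma> xs * h xs) / 2" if g: "\<gamma> \<in> Psym X N" for \<gamma>
  proof -
    have pg: "prob_on X N \<gamma>" using g by (simp add: Psym_def)
    have t1: "(real N)^2 * (\<Sum>a\<in>X. lam a * marg1 X N \<gamma> a)
        = (\<Sum>xs\<in>config X N. \<gamma> xs * (\<Sum>a\<in>X. n a * c xs a))"
    proof -
      have "(real N)^2 * (\<Sum>a\<in>X. lam a * marg1 X N \<gamma> a) = (\<Sum>a\<in>X. (real N * lam a) * (real N * marg1 X N \<gamma> a))"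
        by (simp add: sum_distrib_left power2_eq_square algebra_simps)
      also have "\<dots> = (\<Sum>a\<in>X. n a * (\<Sum>xs\<in>config X N. \<gamma> xs * c xs a))"
        unfolding lamN c_def marg_sym[OF fin g N0] ..
      also have "\<dots> = (\<Sum>xs\<in>config X N. \<gamma> xs * (\<Sum>a\<in>X. n a * c xs a))"
        by (simp add: sum_distrib_left sum.swap[of _ X] algebra_simps)
      finally show ?thesis .
    qed
    have t2: "C_GS p X N \<gamma> = (\<Sum>xs\<in>config X N. \<gamma> xs * ((real N ^ 2 - (\<Sum>a\<in>X. c xs a ^ 2)) / 2))"
      unfolding C_GS_def
    proof (intro sum.cong refl)
      fix xs assume xs: "xs \<in> config X N"
      show "\<gamma> xs * (\<Sum>(i,j)\<in>{(i,j). i < j \<and> j < N}. ddisc (xs ! i) (xs ! j) powr p)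
          = \<gamma> xs * ((real N ^ 2 - (\<Sum>a\<in>X. c xs a ^ 2)) / 2)"
        using cost_formula[OF fin xs p0] unfolding c_def by simp
    qed
    have pw: "(\<Sum>a\<in>X. n a * c xs a) + (real N ^ 2 - (\<Sum>a\<in>X. c xs a ^ 2)) / 2 = Q - h xs / 2" for xs
    proof -
      have "h xs = (\<Sum>a\<in>X. n a ^ 2) - 2 * (\<Sum>a\<in>X. n a * c xs a) + (\<Sum>a\<in>X. c xs a ^ 2)"
        unfolding h_def by (simp add: power2_diff sum.distrib sum_subtractf sum_distrib_left mult.assoc)
      then show ?thesis unfolding Q_def by (simp add: field_simps)
    qed
    have "C_lam p X N lam \<gamma> = (\<Sum>xs\<in>config X N. \<gamma> xs * (Q - h xs / 2))"
      unfolding C_lam_def t1 t2 pw[symmetric] by (simp add: sum.distrib[symmetric] algebra_simps)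
    also have "\<dots> = Q * (\<Sum>xs\<in>config X N. \<gamma> xs) - (\<Sum>xs\<in>config X N. \<gamma> xs * h xs) / 2"
      by (simp add: algebra_simps sum_subtractf sum_distrib_left sum_divide_distrib)
    also have "\<dots> = Q - (\<Sum>xs\<in>config X N. \<gamma> xs * h xs) / 2" using pg by (simp add: prob_on_def)
    finally show ?thesis .
  qed
  have hnn: "0 \<le> h xs" for xs unfolding h_def by (intro sum_nonneg) simp
  have h0: "h xs = 0" if "mset xs = mset x0" for xs unfolding h_def n_def c_def using that by simp
  have hpos: "0 < h xs" if xs: "xs \<in> config X N" and ne: "mset xs \<noteq> mset x0" for xs
  proof (rule ccontr)
    assume "\<not> 0 < h xs"
    then have "h xs = 0" using hnn[of xs] by simp
    then have "\<forall>a\<in>X. (n a - c xs a)^2 = 0" unfolding h_def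
      using sum_nonneg_eq_0_iff[OF fin, of "\<lambda>a. (n a - c xs a)^2"] by simp
    then have eqX: "\<forall>a\<in>X. count (mset xs) a = count (mset x0) a" by (simp add: n_def c_def)
    have "mset xs = mset x0"
    proof (rule multiset_eqI)
      fix a show "count (mset xs) a = count (mset x0) a"
      proof (cases "a \<in> X")
        case True then show ?thesis using eqX by simp
      next
        case False
        then have "a \<notin> set xs" "a \<notin> set x0" using xs x0 by (auto simp: config_def)
        then show ?thesis by (metis count_mset_0_iff)
      qed
    qed
    then show False using ne by simp
  qed
  have Cs: "C_lam p X N lam \<gamma>s = Q"
  proof -
    have "(\<Sum>xs\<in>config X N. \<gamma>s xs * h xs) = 0"
    proof (intro sum.neutral ballI)
      fix xs show "\<gamma>s xs * h xs = 0" by (cases "mset xs = mset x0") (simp_all add: zs h0)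
    qed
    then show ?thesis using key[OF gs] by simp
  qed
  have A: "C_lam p X N lam \<gamma> < C_lam p X N lam \<gamma>s" if g: "\<gamma> \<in> Psym X N" and ne: "\<gamma> \<noteq> \<gamma>s" for \<gamma>
  proof -
    have pg: "prob_on X N \<gamma>" using g by (simp add: Psym_def)
    have nn: "0 \<le> \<gamma> xs * h xs" for xs using pg hnn by (simp add: prob_on_def)
    have "0 < (\<Sum>xs\<in>config X N. \<gamma> xs * h xs)"
    proof (rule ccontr)
      assume "\<not> ?thesis"
      then have "(\<Sum>xs\<in>config X N. \<gamma> xs * h xs) = 0" using sum_nonneg[of "config X N" "\<lambda>xs. \<gamma> xs * h xs", OF nn] by linarith
      then have all0: "\<forall>xs\<in>config X N. \<gamma> xs * h xs = 0" using sum_nonneg_eq_0_iff[OF fc, of "\<lambda>xs. \<gamma> xs * h xs"] nn by blast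
      have z: "\<gamma> xs = 0" if "mset xs \<noteq> mset x0" for xs
      proof (cases "xs \<in> config X N")
        case True then show ?thesis using all0 hpos[OF True that] by force
      next
        case False then show ?thesis using pg by (simp add: prob_on_def)
      qed
      have "\<gamma> = \<gamma>s" using orbit_unique[OF fin g x0 z] orbit_unique[OF fin gs x0 zs] by simp
      then show False using ne by simp
    qed
    then show ?thesis using key[OF g] Cs by simp
  qed
  have B: "C_GS p X N \<gamma> < C_GS p X N \<gamma>s" if g: "\<gamma> \<in> Psym X N" and m: "marg1 X N \<gamma> = lam" and ne: "\<gamma> \<noteq> \<gamma>s" for \<gamma>
    using A[OF g ne] m lamdef unfolding C_lam_def by simp
  show ?thesis using A B by blast
qed

end
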